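(* Let $W:\mathcal X\to\mathcal Y$ be a DMC with a fixed input distribution, let $r>0$, and let $\alpha,\beta\in\mathcal Y_{\mathrm{small}}$ be distinct output letters such that $\boldsymbol\beta\in\mathcal C(\boldsymbol\alpha,r)$. Then the channel $Q$ obtained by merging $\alpha$ and $\beta$ satisfies $I(W)-I(Q)\le \frac{4|\mathcal X|r}{|\mathcal Y|}$.
   Context: $\mathcal X,\mathcal Y$ finite disjoint sets, $|\mathcal X|\ge2$; $W$ a DMC with transition probabilities $W(y|x)$; input distribution $\pi(x)>0$ fixed, output probabilities $\pi(y)=\sum_x\pi(x)W(y|x)>0$; $I(\cdot)$ is input–output mutual information (natural log). Merging $\alpha,\beta$ gives $Q$ with output alphabet $(\mathcal Y\setminus\{\alpha,\beta\})\cup\{\gamma\}$, $Q(\gamma|x)=W(\alpha|x)+W(\beta|x)$, $Q(y|x)=W(y|x)$ otherwise. $\mathcal Y_{\mathrm{small}}=\{y\in\mathcal Y:\pi(y)\le 2/|\mathcal Y|\}$. For an output letter $\alpha$, $\boldsymbol\alpha=(\alpha_x)_{x\in\mathcal X}$ with $\alpha_x=W(x|\alpha)=\pi(x)W(\alpha|x)/\pi(\alpha)$ is its posterior probability vector. $\mathbb R^{\mathcal X}_K=\{\boldsymbol\zeta\in\mathbb R^{\mathcal X}:\sum_x\zeta_x=1\}$. $x_{\max}=x_{\max}(\boldsymbol\alpha)$ is an index of a largest entry of $\boldsymbol\alpha$ (ties broken arbitrarily but consistently), $\mathcal X'=\mathcal X\setminus\{x_{\max}\}$, $\omega_\downarrow(a,r)=\max(\sqrt{r^2/4+ar}-r/2,\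 r)$, $\omega'(a,r)=\omega_\downarrow(a,r)/(|\mathcal X|-1)$, and $\mathcal C(\boldsymbol\alpha,r)=\{\boldsymbol\zeta\in\mathbb R^{\mathcal X}_K: |\zeta_x-\alpha_x|\le\omega'(\alpha_x,r)\ \forall x\in\mathcal X'\}$. *)

theory Defs
  imports Complex_Main "HOL-Library.Cardinality"
begin

text \<open>A DMC with finite input alphabet (the type 'x) and output alphabet given by a
finite set of letters; W x y is the transition probability W(y|x), p x the input
distribution pi(x).\<close>

definition out_prob :: "('x::finite \<Rightarrow> real) \<Rightarrow> ('x \<Rightarrow> 'y \<Rightarrow> real) \<Rightarrow> 'y \<Rightarrow> real" where
  "out_prob p W y = (\<Sum>x\<in>UNIV. p x * W x y)"

definition mutual_info :: "('x::finite \<Rightarrow> real) \<Rightarrow> ('x \<Rightarrow> 'y \<Rightarrow> real) \<Rightarrow> 'y set \<Rightarrow> real" where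
  "mutual_info p W Y = (\<Sum>x\<in>UNIV. \<Sum>y\<in>Y.
      (if W x y = 0 then 0 else p x * W x y * ln (W x y / out_prob p W y)))"

text \<open>Merging alpha and beta: the new letter gamma is represented by None, the
remaining letters y by Some y.\<close>
definition merge :: "('x \<Rightarrow> 'y \<Rightarrow> real) \<Rightarrow> 'y \<Rightarrow> 'y \<Rightarrow> 'x \<Rightarrow> 'y option \<Rightarrow> real" where
  "merge W a b x z = (case z of None \<Rightarrow> W x a + W x b | Some y \<Rightarrow> W x y)"

definition merged_alphabet :: "'y set \<Rightarrow> 'y \<Rightarrow> 'y \<Rightarrow> 'y option set" where
  "merged_alphabet Y a b = insert None (Some ` (Y - {a, b}))"

definition Y_small :: "('x::finite \<Rightarrow> real) \<Rightarrow> ('x \<Rightarrow> 'y \<Rightarrow> real) \<Rightarrow> 'y set \<Rightarrow> 'y set" where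
  "Y_small p W Y = {y \<in> Y. out_prob p W y \<le> 2 / real (card Y)}"

definition posterior :: "('x::finite \<Rightarrow> real) \<Rightarrow> ('x \<Rightarrow> 'y \<Rightarrow> real) \<Rightarrow> 'y \<Rightarrow> 'x \<Rightarrow> real" where
  "posterior p W y x = p x * W x y / out_prob p W y"

definition omega_down :: "real \<Rightarrow> real \<Rightarrow> real" where
  "omega_down a r = max (sqrt (r\<^sup>2 / 4 + a * r) - r / 2) r"

definition omega' :: "'x::finite itself \<Rightarrow> real \<Rightarrow> real \<Rightarrow> real" where
  "omega' t a r = omega_down a r / (real CARD('x) - 1)"

text \<open>The set C(alpha, r); xm is the chosen index of a largest entry of alpha.\<close>
definition C_set :: "('x::finite \<Rightarrow> real) \<Rightarrow> 'x \<Rightarrow> real \<Rightarrow> ('x \<Rightarrow> real) set" where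
  "C_set \<alpha> xm r = {\<zeta>. (\<Sum>x\<in>UNIV. \<zeta> x) = 1 \<and>
      (\<forall>x\<in>UNIV - {xm}. \<bar>\<zeta> x - \<alpha> x\<bar> \<le> omega' TYPE('x) (\<alpha> x) r)}"

end

theory Submission
  imports Defs
begin

lemma H:
  fixes w s C S P :: real
  assumes "w\<ge>0" "s>0" "C>0" "S>0" "P>0"
  shows "(if w=0 then 0 else P*w*ln(w/C)) - P*w*ln(s/S) \<le> P*w*((w/C)/(s/S) - 1)"
proof (cases "w=0")
  case False
  hence w: "w>0" using assms by simp
  have "ln(w/C) - ln(s/S) = ln((w/C)/(s/S))" using w assms by (subst ln_div[of "w/C" "s/S"]) auto
  also have "\<dots> \<le> (w/C)/(s/S) - 1" using w assms by (intro ln_le_minus_one) simp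
  finally have "ln(w/C) - ln(s/S) \<le> (w/C)/(s/S) - 1" .
  hence "P*w*(ln(w/C) - ln(s/S)) \<le> P*w*((w/C)/(s/S) - 1)"
    using w assms by (intro mult_left_mono) auto
  thus ?thesis using False by (simp add: algebra_simps)
qed simp

lemma L1:
  fixes wa wb A B P :: real
  assumes "wa\<ge>0" "wb\<ge>0" "A>0" "B>0" "P>0"
  shows "(if wa=0 then 0 else P*wa*ln(wa/A)) + (if wb=0 then 0 else P*wb*ln(wb/B))
     - (if wa+wb=0 then 0 else P*(wa+wb)*ln((wa+wb)/(A+B)))
     \<le> A*B*(P*wa/A - P*wb/B)^2/(A*(P*wa/A)+B*(P*wb/B))"
proof (cases "wa+wb=0")
  case True
  hence "wa=0" "wb=0" using assms by auto
  thus ?thesis by simp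
next
  case False
  hence s: "wa+wb>0" using assms by auto
  have h1: "(if wa=0 then 0 else P*wa*ln(wa/A)) - P*wa*ln((wa+wb)/(A+B)) \<le> P*wa*((wa/A)/((wa+wb)/(A+B)) - 1)"
    using assms s by (intro H) auto
  have h2: "(if wb=0 then 0 else P*wb*ln(wb/B)) - P*wb*ln((wa+wb)/(A+B)) \<le> P*wb*((wb/B)/((wa+wb)/(A+B)) - 1)"
    using assms s by (intro H) auto
  have eq: "P*wa*((wa/A)/((wa+wb)/(A+B)) - 1) + P*wb*((wb/B)/((wa+wb)/(A+B)) - 1)
      = A*B*(P*wa/A - P*wb/B)^2/(A*(P*wa/A)+B*(P*wb/B))"
  proof -
    have nz: "A \<noteq> 0" "B \<noteq> 0" "P \<noteq> 0" "wa+wb \<noteq> 0" "P*wa+P*wb \<noteq> 0" using assms s by (auto simp: distrib_left[symmetric])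
    have "A*(P*wa/A)+B*(P*wb/B) = P*(wa+wb)" using nz by (simp add: algebra_simps)
    moreover have "A*B*(P*wa/A - P*wb/B)^2 = P^2*(B*wa-A*wb)^2/(A*B)" using nz
      by (simp add: field_simps power2_eq_square)
    moreover have "P*wa*((wa/A)/((wa+wb)/(A+B)) - 1) + P*wb*((wb/B)/((wa+wb)/(A+B)) - 1)
       = P*(B*wa-A*wb)^2/(A*B*(wa+wb))"
    proof -
      define t where "t = wa + wb"
      have t: "t > 0" using s t_def by simp
      have z: "A*wa+A*wb \<noteq> 0" "B*wa+B*wb \<noteq> 0"
        using nz by (simp_all add: distrib_left[symmetric])
      have e1: "(wa/A)/((wa+wb)/(A+B)) - 1 = (B*wa - A*wb)/(A*t)"
        using z nz unfolding t_def by (simp add: field_simps)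
      have e2: "(wb/B)/((wa+wb)/(A+B)) - 1 = -(B*wa - A*wb)/(B*t)"
        using z nz unfolding t_def by (simp add: field_simps)
      have "P*wa*((B*wa - A*wb)/(A*t)) + P*wb*(-(B*wa - A*wb)/(B*t))
          = P*(B*wa-A*wb)/t * (wa/A - wb/B)" using nz t by (simp add: field_simps)
      also have "wa/A - wb/B = (B*wa - A*wb)/(A*B)" using nz by (simp add: field_simps)
      finally show ?thesis unfolding e1 e2 t_def by (simp add: power2_eq_square mult.commute mult.assoc)
    qed
    ultimately show ?thesis using nz by (simp add: power2_eq_square)
  qed
  show ?thesis using h1 h2 eq False by (simp add: algebra_simps)
qed

lemma L2:
  fixes a b A B r :: real
  assumes "a\<ge>0" "b\<ge>0" "A>0" "B>0" "r>0" "\<bar>a-b\<bar> \<le> omega_down a r"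
  shows "A*B*(a-b)^2/(A*a+B*b) \<le> (A+B)*r"
proof (cases "A*a+B*b = 0")
  case True thus ?thesis using assms by simp
next
  case False
  hence pos: "A*a+B*b > 0" using assms by (simp add: add_nonneg_nonneg less_le)
  have key: "A*B*(a-b)^2 \<le> (A+B)*r*(A*a+B*b)"
  proof (cases "\<bar>a-b\<bar> \<le> r")
    case True
    show ?thesis
    proof (cases "a \<ge> b")
      case True
      have "A*B*(a-b)^2 = (A*B*(a-b))*(a-b)" by (simp add: power2_eq_square)
      also have "\<dots> \<le> (A*B*a)*r" using True \<open>\<bar>a-b\<bar> \<le> r\<close> assms
        by (intro mult_mono) (auto simp: mult_left_mono)
      also have "\<dots> \<le> (A+B)*r*(A*a+B*b)" using assms
        by (simp add: algebra_simps mult_nonneg_nonneg add_nonneg_nonneg)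
      finally show ?thesis .
    next
      case False
      have "A*B*(a-b)^2 = (A*B*(b-a))*(b-a)" by (simp add: power2_eq_square algebra_simps)
      also have "\<dots> \<le> (A*B*b)*r" using False \<open>\<bar>a-b\<bar> \<le> r\<close> assms
        by (intro mult_mono) (auto simp: mult_left_mono)
      also have "\<dots> \<le> (A+B)*r*(A*a+B*b)" using assms
        by (simp add: algebra_simps mult_nonneg_nonneg add_nonneg_nonneg)
      finally show ?thesis .
    qed
  next
    case False
    define d where "d = sqrt (r\<^sup>2 / 4 + a * r) - r / 2"
    have ad: "\<bar>a-b\<bar> \<le> d" using False assms(6) unfolding omega_down_def d_def by linarith
    have sq: "(sqrt (r\<^sup>2 / 4 + a * r))^2 = r\<^sup>2 / 4 + a * r" using assms by simp
    have dge: "d \<ge> 0" using ad by linarith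
    have "d^2 + r*d = a*r" using sq unfolding d_def by (simp add: power2_eq_square algebra_simps)
    hence d2: "d^2 \<le> a*r" using dge assms by (smt (verit) mult_nonneg_nonneg)
    have "(a-b)^2 \<le> d^2" using ad by (metis abs_ge_zero power2_abs power_mono)
    hence "A*B*(a-b)^2 \<le> A*B*(a*r)" using d2 assms by (intro mult_left_mono) auto
    also have "\<dots> \<le> (A+B)*r*(A*a+B*b)" using assms
      by (simp add: algebra_simps mult_nonneg_nonneg add_nonneg_nonneg)
    finally show ?thesis .
  qed
  show ?thesis using key pos by (simp add: divide_le_eq)
qed


lemma omega_mono:
  assumes "0 \<le> a" "a \<le> a'" "r > 0"
  shows "omega_down a r \<le> omega_down a' r"
proof -
  have "sqrt (r\<^sup>2 / 4 + a * r) \<le> sqrt (r\<^sup>2 / 4 + a' * r)"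
    using assms by (intro real_sqrt_le_mono) (simp add: mult_right_mono)
  thus ?thesis unfolding omega_down_def by linarith
qed

lemma omega_ge: "omega_down a r \<ge> r" unfolding omega_down_def by simp

theorem corollary4:
  fixes W :: "'x::finite \<Rightarrow> 'y::finite \<Rightarrow> real"
    and p :: "'x \<Rightarrow> real"
    and r :: real and \<alpha> \<beta> :: 'y and xm :: 'x
  assumes card_X: "CARD('x) \<ge> 2"
    and W_nonneg: "\<And>x y. W x y \<ge> 0"
    and W_sum: "\<And>x. (\<Sum>y\<in>UNIV. W x y) = 1"
    and p_pos: "\<And>x. p x > 0"
    and p_sum: "(\<Sum>x\<in>UNIV. p x) = 1"
    and out_pos: "\<And>y. out_prob p W y > 0"
    and r_pos: "r > 0"
    and \<alpha>_small: "\<alpha> \<in> Y_small p W UNIV"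
    and \<beta>_small: "\<beta> \<in> Y_small p W UNIV"
    and distinct: "\<alpha> \<noteq> \<beta>"
    and xm_max: "\<And>x. posterior p W \<alpha> x \<le> posterior p W \<alpha> xm"
    and \<beta>_in_C: "posterior p W \<beta> \<in> C_set (posterior p W \<alpha>) xm r"
  shows "mutual_info p W UNIV - mutual_info p (merge W \<alpha> \<beta>) (merged_alphabet UNIV \<alpha> \<beta>)
           \<le> 4 * real CARD('x) * r / real CARD('y)"
  proof -
  define A where "A = out_prob p W \<alpha>"
  define B where "B = out_prob p W \<beta>"
  define a where "a = posterior p W \<alpha>"
  define b where "b = posterior p W \<beta>"
  define n where "n = real CARD('x)"
  have A: "A > 0" and B: "B > 0" using out_pos unfolding A_def B_def by auto
  have Ale: "A \<le> 2 / real CARD('y)" using \<alpha>_small unfolding Y_small_def A_def by simp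
  have Ble: "B \<le> 2 / real CARD('y)" using \<beta>_small unfolding Y_small_def B_def by simp
  have a_nn: "a x \<ge> 0" for x using p_pos[of x] W_nonneg[of x \<alpha>] A unfolding a_def posterior_def A_def by simp
  have b_nn: "b x \<ge> 0" for x using p_pos[of x] W_nonneg[of x \<beta>] B unfolding b_def posterior_def B_def by simp
  have a_sum: "(\<Sum>x\<in>UNIV. a x) = 1"
    using A unfolding a_def posterior_def A_def out_prob_def by (simp add: sum_divide_distrib[symmetric])
  have b_sum: "(\<Sum>x\<in>UNIV. b x) = 1" using \<beta>_in_C unfolding b_def C_set_def by simp
  have bC: "\<bar>b x - a x\<bar> \<le> omega' TYPE('x) (a x) r" if "x \<noteq> xm" for x
    using \<beta>_in_C that unfolding b_def a_def C_set_def by auto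
  have n2: "n \<ge> 2" using card_X unfolding n_def by simp
  have om'_def: "omega' TYPE('x) t r = omega_down t r / (n - 1)" for t unfolding omega'_def n_def by simp
  have bnd: "\<bar>a x - b x\<bar> \<le> omega_down (a x) r" for x
  proof (cases "x = xm")
    case False
    have "\<bar>a x - b x\<bar> \<le> omega_down (a x) r / (n - 1)" using bC[OF False] om'_def by (simp add: abs_minus_commute)
    also have "\<dots> \<le> omega_down (a x) r" using n2 omega_ge[of r "a x"] r_pos
      by (simp add: divide_le_eq)
    finally show ?thesis .
  next
    case True
    have card1: "card (UNIV - {xm}) = CARD('x) - 1" by (simp add: card_Diff_subset)
    have "(\<Sum>x\<in>UNIV. b x - a x) = 0" using a_sum b_sum by (simp add: sum_subtractf)
    hence "b xm - a xm + (\<Sum>x\<in>UNIV-{xm}. b x - a x) = 0"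
      by (simp add: sum.remove[of UNIV xm])
    hence "\<bar>a xm - b xm\<bar> = \<bar>\<Sum>x\<in>UNIV-{xm}. b x - a x\<bar>" by linarith
    also have "\<dots> \<le> (\<Sum>x\<in>UNIV-{xm}. \<bar>b x - a x\<bar>)" by (rule sum_abs)
    also have "\<dots> \<le> (\<Sum>x\<in>UNIV-{xm}. omega_down (a xm) r / (n - 1))"
    proof (rule sum_mono)
      fix x assume "x \<in> UNIV - {xm}"
      hence "\<bar>b x - a x\<bar> \<le> omega_down (a x) r / (n - 1)" using bC om'_def by auto
      also have "\<dots> \<le> omega_down (a xm) r / (n - 1)" using n2 omega_mono[OF a_nn, of x "a xm" r] r_pos xm_max[of x]
        unfolding a_def by (intro divide_right_mono) auto
      finally show "\<bar>b x - a x\<bar> \<le> omega_down (a xm) r / (n - 1)" .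
    qed
    also have "\<dots> = omega_down (a xm) r" using card1 n2 card_X unfolding n_def
      by (simp add: of_nat_diff)
    finally show ?thesis using True by simp
  qed
  define h where "h = (\<lambda>x y. if W x y = 0 then 0 else p x * W x y * ln (W x y / out_prob p W y))"
  define Q where "Q = merge W \<alpha> \<beta>"
  define g where "g = (\<lambda>x z. if Q x z = 0 then 0 else p x * Q x z * ln (Q x z / out_prob p Q z))"
  define R where "R = (UNIV::'y set) - {\<alpha>, \<beta>}"
  have outQS: "out_prob p Q (Some y) = out_prob p W y" for y unfolding out_prob_def Q_def merge_def by simp
  have outQN: "out_prob p Q None = A + B" unfolding out_prob_def Q_def merge_def A_def B_def
    by (simp add: sum.distrib distrib_left)
  have gS: "g x (Some y) = h x y" for x y unfolding g_def h_def outQS by (simp add: Q_def merge_def)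
  have I1: "mutual_info p W UNIV = (\<Sum>x\<in>UNIV. h x \<alpha> + h x \<beta> + (\<Sum>y\<in>R. h x y))"
  proof -
    have "(\<Sum>y\<in>UNIV. h x y) = h x \<alpha> + h x \<beta> + (\<Sum>y\<in>R. h x y)" for x
    proof -
      have "(\<Sum>y\<in>UNIV. h x y) = h x \<alpha> + (\<Sum>y\<in>UNIV-{\<alpha>}. h x y)" by (simp add: sum.remove[of UNIV \<alpha>])
      also have "(\<Sum>y\<in>UNIV-{\<alpha>}. h x y) = h x \<beta> + (\<Sum>y\<in>UNIV-{\<alpha>}-{\<beta>}. h x y)"
        using distinct by (intro sum.remove) auto
      finally show ?thesis unfolding R_def by (simp add: Diff_insert2[symmetric] add.assoc)
    qed
    thus ?thesis unfolding mutual_info_def h_def by simp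
  qed
  have I2: "mutual_info p Q (merged_alphabet UNIV \<alpha> \<beta>) = (\<Sum>x\<in>UNIV. g x None + (\<Sum>y\<in>R. h x y))"
  proof -
    have "(\<Sum>z\<in>merged_alphabet UNIV \<alpha> \<beta>. g x z) = g x None + (\<Sum>y\<in>R. h x y)" for x
    proof -
      have "(\<Sum>z\<in>merged_alphabet UNIV \<alpha> \<beta>. g x z) = g x None + (\<Sum>z\<in>Some ` R. g x z)"
        unfolding merged_alphabet_def R_def by (subst sum.insert) auto
      also have "(\<Sum>z\<in>Some ` R. g x z) = (\<Sum>y\<in>R. h x y)" by (simp add: sum.reindex gS)
      finally show ?thesis .
    qed
    thus ?thesis unfolding mutual_info_def g_def by simp
  qed
  have diff: "mutual_info p W UNIV - mutual_info p Q (merged_alphabet UNIV \<alpha> \<beta>)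
      = (\<Sum>x\<in>UNIV. h x \<alpha> + h x \<beta> - g x None)"
    unfolding I1 I2 by (simp add: sum_subtractf[symmetric])
  have per: "h x \<alpha> + h x \<beta> - g x None \<le> (A + B) * r" for x
  proof -
    have "h x \<alpha> + h x \<beta> - g x None \<le> A*B*(p x*W x \<alpha>/A - p x*W x \<beta>/B)^2/(A*(p x*W x \<alpha>/A)+B*(p x*W x \<beta>/B))"
    proof -
      have hA: "h x \<alpha> = (if W x \<alpha> = 0 then 0 else p x * W x \<alpha> * ln (W x \<alpha> / A))"
        unfolding h_def A_def by simp
      have hB: "h x \<beta> = (if W x \<beta> = 0 then 0 else p x * W x \<beta> * ln (W x \<beta> / B))"
        unfolding h_def B_def by simp
      have gN: "g x None = (if W x \<alpha> + W x \<beta> = 0 then 0 else p x * (W x \<alpha> + W x \<beta>) * ln ((W x \<alpha> + W x \<beta>) / (A + B)))"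
        unfolding g_def outQN by (simp add: Q_def merge_def)
      show ?thesis unfolding hA hB gN by (rule L1) (auto simp: W_nonneg A B p_pos)
    qed
    also have "\<dots> = A*B*(a x - b x)^2/(A*a x + B*b x)"
      unfolding a_def b_def posterior_def A_def B_def by simp
    also have "\<dots> \<le> (A+B)*r" using L2[OF a_nn b_nn A B r_pos bnd] .
    finally show ?thesis .
  qed
  have "(\<Sum>x\<in>UNIV. h x \<alpha> + h x \<beta> - g x None) \<le> (\<Sum>x\<in>(UNIV::'x set). (A+B)*r)"
    by (rule sum_mono) (rule per)
  also have "\<dots> = n * ((A+B)*r)" unfolding n_def by simp
  also have "\<dots> \<le> n * (4 / real CARD('y) * r)"
    using Ale Ble r_pos n2 by (intro mult_left_mono mult_right_mono) auto
  finally show ?thesis using diff unfolding Q_def n_def by (simp add: mult.assoc mult.left_commute)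
qed

end
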